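(* Let $\varphi\in\mathcal{S}(\mathbb{R})$ and set $F(\rho,y)=\varphi(\rho y)-\varphi(\rho\sinh(y))$. Then for all integers $n,m\ge0$, all $1\le p\le\infty$, and $\rho\ge1$, \[ \|\partial_\rho^n(\rho^{-1}\partial_y)^mF(\rho,\cdot)\|_{L^p_y}\leq C_{n,m}(\|\varphi\|_{\mathcal S})\,\rho^{-2-\frac1p}. \]
   Context: $C_{n,m}(\|\varphi\|_{\mathcal S})$ denotes a positive constant depending on $n,m$ and finitely many Schwartz seminorms of $\varphi$. $L^p_y$ is the Lebesgue space in $y\in\mathbb{R}$ at fixed $\rho$. *)

theory Defs
  imports "HOL-Analysis.Analysis"
begin

fun hderiv :: "nat \<Rightarrow> (real \<Rightarrow> complex) \<Rightarrow> real \<Rightarrow> complex" where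
  "hderiv 0 f = f"
| "hderiv (Suc l) f = (\<lambda>x. vector_derivative (hderiv l f) (at x))"

definition schwartz :: "(real \<Rightarrow> complex) \<Rightarrow> bool" where
  "schwartz f \<longleftrightarrow>
     (\<forall>l x. hderiv l f differentiable at x) \<and>
     (\<forall>k l. \<exists>C. \<forall>x. \<bar>x\<bar> ^ k * norm (hderiv l f x) \<le> C)"

definition schwartz_seminorm :: "nat \<Rightarrow> nat \<Rightarrow> (real \<Rightarrow> complex) \<Rightarrow> real" where
  "schwartz_seminorm k l f = (SUP x. \<bar>x\<bar> ^ k * norm (hderiv l f x))"

definition schwartz_norm :: "nat \<Rightarrow> (real \<Rightarrow> complex) \<Rightarrow> real" where
  "schwartz_norm N f = Max ((\<lambda>(k, l). schwartz_seminorm k l f) ` ({..N} \<times> {..N}))"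

definition d_rho :: "(real \<Rightarrow> real \<Rightarrow> complex) \<Rightarrow> real \<Rightarrow> real \<Rightarrow> complex" where
  "d_rho G = (\<lambda>\<rho> y. vector_derivative (\<lambda>r. G r y) (at \<rho>))"

definition d_y_scaled :: "(real \<Rightarrow> real \<Rightarrow> complex) \<Rightarrow> real \<Rightarrow> real \<Rightarrow> complex" where
  "d_y_scaled G = (\<lambda>\<rho> y. complex_of_real (1 / \<rho>) * vector_derivative (\<lambda>t. G \<rho> t) (at y))"

definition Ffun :: "(real \<Rightarrow> complex) \<Rightarrow> real \<Rightarrow> real \<Rightarrow> complex" where
  "Ffun \<phi> = (\<lambda>\<rho> y. \<phi> (\<rho> * y) - \<phi> (\<rho> * sinh y))"

end

theory Submission
  imports Defs "HOL-Real_Asymp.Real_Asymp"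
begin


datatype trm = Tm real int nat nat nat nat nat

fun tm :: "(real\<Rightarrow>complex) \<Rightarrow> (real\<Rightarrow>real) \<Rightarrow> (real\<Rightarrow>real) \<Rightarrow> (real\<Rightarrow>real) \<Rightarrow> (real\<Rightarrow>real) \<Rightarrow> trm \<Rightarrow> real \<Rightarrow> real \<Rightarrow> complex" where
"tm \<phi> g0 g1 g2 g3 (Tm c a i j k l p) \<rho> y = complex_of_real (c * \<rho> powr of_int a * g0 y ^ i * g1 y ^ j * g2 y ^ k * g3 y ^ l) * hderiv p \<phi> (\<rho> * g0 y)"

fun dyl :: "trm \<Rightarrow> trm list" where
"dyl (Tm c a i j k l p) = [Tm (c * real i) (a-1) (i-1) (j+1) k l p, Tm (c * real j) (a-1) i (j-1) (k+1) l p,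
   Tm (c * real k) (a-1) i j (k-1) (l+1) p, Tm (c * real l) (a-1) i j (k+1) (l-1) p, Tm c a i (j+1) k l (p+1)]"

fun drl :: "trm \<Rightarrow> trm list" where
"drl (Tm c a i j k l p) = [Tm (c * of_int a) (a-1) i j k l p, Tm c a (i+1) j k l (p+1)]"

lemma hderiv_has:
  assumes "schwartz \<phi>"
  shows "(hderiv p \<phi> has_vector_derivative hderiv (Suc p) \<phi> x) (at x)"
  using assms unfolding schwartz_def by (simp add: vector_derivative_works[symmetric])

lemma tm_dy:
  assumes S: "schwartz \<phi>" and r: "\<rho> > 0"
    and d0: "\<And>y. (g0 has_real_derivative g1 y) (at y)"
    and d1: "\<And>y. (g1 has_real_derivative g2 y) (at y)"
    and d2: "\<And>y. (g2 has_real_derivative g3 y) (at y)"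
    and d3: "\<And>y. (g3 has_real_derivative g2 y) (at y)"
  shows "((\<lambda>y. tm \<phi> g0 g1 g2 g3 t \<rho> y) has_vector_derivative
      (complex_of_real \<rho> * (\<Sum>u\<leftarrow>dyl t. tm \<phi> g0 g1 g2 g3 u \<rho> y))) (at y)"
proof (cases t)
  case (Tm c a i j k l p)
  define R where "R y = c * \<rho> powr of_int a * g0 y ^ i * g1 y ^ j * g2 y ^ k * g3 y ^ l" for y
  define R' where "R' y = c * \<rho> powr of_int a * (real i * g1 y * g0 y ^ (i-1) * g1 y ^ j * g2 y ^ k * g3 y ^ l
      + g0 y ^ i * (real j * g2 y * g1 y ^ (j-1)) * g2 y ^ k * g3 y ^ l
      + g0 y ^ i * g1 y ^ j * (real k * g3 y * g2 y ^ (k-1)) * g3 y ^ l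
      + g0 y ^ i * g1 y ^ j * g2 y ^ k * (real l * g2 y * g3 y ^ (l-1)))" for y
  have dR: "(R has_real_derivative R' y) (at y)"
    unfolding R_def R'_def
    by (rule derivative_eq_intros d0 d1 d2 d3 refl | simp)+ (simp add: algebra_simps)
  have dA: "((\<lambda>y. \<rho> * g0 y) has_vector_derivative (\<rho> * g1 y)) (at y)"
    using d0[of y] by (auto intro!: derivative_eq_intros simp: has_real_derivative_iff_has_vector_derivative[symmetric])
  have dP: "((\<lambda>y. hderiv p \<phi> (\<rho> * g0 y)) has_vector_derivative ((\<rho> * g1 y) *\<^sub>R hderiv (Suc p) \<phi> (\<rho> * g0 y))) (at y)"
    using vector_diff_chain_at[OF dA hderiv_has[OF S]] by (simp add: o_def)
  have "((\<lambda>y. complex_of_real (R y) * hderiv p \<phi> (\<rho> * g0 y)) has_vector_derivative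
        (complex_of_real (R y) * ((\<rho> * g1 y) *\<^sub>R hderiv (Suc p) \<phi> (\<rho> * g0 y)) + complex_of_real (R' y) * hderiv p \<phi> (\<rho> * g0 y))) (at y)"
    by (rule has_vector_derivative_mult[OF has_vector_derivative_of_real[OF dR] dP])
  moreover have "complex_of_real (R y) * ((\<rho> * g1 y) *\<^sub>R hderiv (Suc p) \<phi> (\<rho> * g0 y)) + complex_of_real (R' y) * hderiv p \<phi> (\<rho> * g0 y)
     = complex_of_real \<rho> * (\<Sum>u\<leftarrow>dyl t. tm \<phi> g0 g1 g2 g3 u \<rho> y)"
  proof -
    have e: "\<rho> powr of_int a = \<rho> powr of_int (a - 1) * \<rho>"
      using r by (simp add: powr_diff)
    obtain P where P: "P = \<rho> powr of_int (a - 1)" by simp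
    show ?thesis
      unfolding Tm R_def R'_def
      apply (simp only: dyl.simps tm.simps list.map sum_list.Cons sum_list.Nil)
      unfolding e unfolding P[symmetric]
      by (simp add: scaleR_conv_of_real algebra_simps)
  qed
  ultimately show ?thesis unfolding Tm R_def by simp
qed

lemma tm_dr:
  assumes S: "schwartz \<phi>" and r: "\<rho> > 0"
  shows "((\<lambda>r. tm \<phi> g0 g1 g2 g3 t r y) has_vector_derivative
      (\<Sum>u\<leftarrow>drl t. tm \<phi> g0 g1 g2 g3 u \<rho> y)) (at \<rho>)"
proof (cases t)
  case (Tm c a i j k l p)
  define M where "M = g0 y ^ i * g1 y ^ j * g2 y ^ k * g3 y ^ l"
  have dR: "((\<lambda>r. c * r powr of_int a * M) has_real_derivative (c * (of_int a * \<rho> powr (of_int a - 1)) * M)) (at \<rho>)"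
    using r by (auto intro!: derivative_eq_intros)
  have dA: "((\<lambda>r. r * g0 y) has_vector_derivative (g0 y)) (at \<rho>)"
    by (auto intro!: derivative_eq_intros simp: has_real_derivative_iff_has_vector_derivative[symmetric])
  have dP: "((\<lambda>r. hderiv p \<phi> (r * g0 y)) has_vector_derivative (g0 y *\<^sub>R hderiv (Suc p) \<phi> (\<rho> * g0 y))) (at \<rho>)"
    using vector_diff_chain_at[OF dA hderiv_has[OF S]] by (simp add: o_def)
  have "((\<lambda>r. complex_of_real (c * r powr of_int a * M) * hderiv p \<phi> (r * g0 y)) has_vector_derivative
        (complex_of_real (c * \<rho> powr of_int a * M) * (g0 y *\<^sub>R hderiv (Suc p) \<phi> (\<rho> * g0 y)) + complex_of_real (c * (of_int a * \<rho> powr (of_int a - 1)) * M) * hderiv p \<phi> (\<rho> * g0 y))) (at \<rho>)"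
    by (rule has_vector_derivative_mult[OF has_vector_derivative_of_real[OF dR] dP])
  moreover have "complex_of_real (c * \<rho> powr of_int a * M) * (g0 y *\<^sub>R hderiv (Suc p) \<phi> (\<rho> * g0 y)) + complex_of_real (c * (of_int a * \<rho> powr (of_int a - 1)) * M) * hderiv p \<phi> (\<rho> * g0 y)
     = (\<Sum>u\<leftarrow>drl t. tm \<phi> g0 g1 g2 g3 u \<rho> y)"
    unfolding Tm M_def
    by (simp add: scaleR_conv_of_real algebra_simps)
  moreover have "(\<lambda>r. tm \<phi> g0 g1 g2 g3 t r y) = (\<lambda>r. complex_of_real (c * r powr of_int a * M) * hderiv p \<phi> (r * g0 y))"
    unfolding Tm M_def by (simp add: mult.assoc)
  ultimately show ?thesis by simp
qed

definition D :: "(real\<Rightarrow>complex) \<Rightarrow> trm list \<Rightarrow> real \<Rightarrow> real \<Rightarrow> complex" where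
"D \<phi> L \<rho> y = (\<Sum>t\<leftarrow>L. tm \<phi> (\<lambda>y. y) (\<lambda>_. 1) (\<lambda>_. 0) (\<lambda>_. 0) t \<rho> y - tm \<phi> sinh cosh sinh cosh t \<rho> y)"

lemma sum_list_vd:
  assumes "\<And>t. t \<in> set L \<Longrightarrow> ((\<lambda>x. f t x) has_vector_derivative f' t) F"
  shows "((\<lambda>x. \<Sum>t\<leftarrow>L. f t x) has_vector_derivative (\<Sum>t\<leftarrow>L. f' t)) F"
  using assms
proof (induction L)
  case Nil then show ?case by (simp add: has_vector_derivative_const)
next
  case (Cons a L) then show ?case by (auto intro!: has_vector_derivative_add)
qed

lemma D_dy:
  assumes S: "schwartz \<phi>" and r: "\<rho> > 0"
  shows "((\<lambda>y. D \<phi> L \<rho> y) has_vector_derivative (complex_of_real \<rho> * D \<phi> (concat (map dyl L)) \<rho> y)) (at y)"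
proof -
  have 1: "((\<lambda>y. tm \<phi> (\<lambda>y. y) (\<lambda>_. 1) (\<lambda>_. 0) (\<lambda>_. 0) t \<rho> y) has_vector_derivative
      (complex_of_real \<rho> * (\<Sum>u\<leftarrow>dyl t. tm \<phi> (\<lambda>y. y) (\<lambda>_. 1) (\<lambda>_. 0) (\<lambda>_. 0) u \<rho> y))) (at y)" for t
    by (rule tm_dy[OF S r]) (auto intro!: derivative_eq_intros)
  have 2: "((\<lambda>y. tm \<phi> sinh cosh sinh cosh t \<rho> y) has_vector_derivative
      (complex_of_real \<rho> * (\<Sum>u\<leftarrow>dyl t. tm \<phi> sinh cosh sinh cosh u \<rho> y))) (at y)" for t
    by (rule tm_dy[OF S r]) (auto intro!: derivative_eq_intros)
  have "((\<lambda>y. D \<phi> L \<rho> y) has_vector_derivative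
     (\<Sum>t\<leftarrow>L. complex_of_real \<rho> * (\<Sum>u\<leftarrow>dyl t. tm \<phi> (\<lambda>y. y) (\<lambda>_. 1) (\<lambda>_. 0) (\<lambda>_. 0) u \<rho> y)
        - complex_of_real \<rho> * (\<Sum>u\<leftarrow>dyl t. tm \<phi> sinh cosh sinh cosh u \<rho> y))) (at y)"
    unfolding D_def by (rule sum_list_vd) (intro has_vector_derivative_diff 1 2)
  moreover have "(\<Sum>t\<leftarrow>L. complex_of_real \<rho> * (\<Sum>u\<leftarrow>dyl t. tm \<phi> (\<lambda>y. y) (\<lambda>_. 1) (\<lambda>_. 0) (\<lambda>_. 0) u \<rho> y)
        - complex_of_real \<rho> * (\<Sum>u\<leftarrow>dyl t. tm \<phi> sinh cosh sinh cosh u \<rho> y)) = complex_of_real \<rho> * D \<phi> (concat (map dyl L)) \<rho> y"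
    unfolding D_def
    by (induction L) (simp_all add: algebra_simps sum_list_subtractf)
  ultimately show ?thesis by simp
qed

lemma D_dr:
  assumes S: "schwartz \<phi>" and r: "\<rho> > 0"
  shows "((\<lambda>r. D \<phi> L r y) has_vector_derivative D \<phi> (concat (map drl L)) \<rho> y) (at \<rho>)"
proof -
  have "((\<lambda>r. D \<phi> L r y) has_vector_derivative
     (\<Sum>t\<leftarrow>L. (\<Sum>u\<leftarrow>drl t. tm \<phi> (\<lambda>y. y) (\<lambda>_. 1) (\<lambda>_. 0) (\<lambda>_. 0) u \<rho> y)
        - (\<Sum>u\<leftarrow>drl t. tm \<phi> sinh cosh sinh cosh u \<rho> y))) (at \<rho>)"
    unfolding D_def by (rule sum_list_vd) (intro has_vector_derivative_diff tm_dr[OF S r])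
  moreover have "(\<Sum>t\<leftarrow>L. (\<Sum>u\<leftarrow>drl t. tm \<phi> (\<lambda>y. y) (\<lambda>_. 1) (\<lambda>_. 0) (\<lambda>_. 0) u \<rho> y)
        - (\<Sum>u\<leftarrow>drl t. tm \<phi> sinh cosh sinh cosh u \<rho> y)) = D \<phi> (concat (map drl L)) \<rho> y"
    unfolding D_def
    by (induction L) (simp_all add: algebra_simps sum_list_subtractf)
  ultimately show ?thesis by simp
qed

definition dyI :: "nat \<Rightarrow> trm list" where
"dyI m = ((\<lambda>L. concat (map dyl L)) ^^ m) [Tm 1 0 0 0 0 0 0]"

definition drI :: "nat \<Rightarrow> trm list \<Rightarrow> trm list" where
"drI n L = ((\<lambda>L. concat (map drl L)) ^^ n) L"

lemma Y_iter:
  assumes S: "schwartz \<phi>"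
  shows "\<forall>\<rho>>0. \<forall>y. (d_y_scaled ^^ m) (Ffun \<phi>) \<rho> y = D \<phi> (dyI m) \<rho> y"
proof (induction m)
  case 0
  then show ?case by (simp add: dyI_def D_def Ffun_def)
next
  case (Suc m)
  show ?case
  proof (intro allI impI)
    fix \<rho> y :: real assume r: "\<rho> > 0"
    have e: "(\<lambda>t. (d_y_scaled ^^ m) (Ffun \<phi>) \<rho> t) = (\<lambda>t. D \<phi> (dyI m) \<rho> t)"
      using Suc r by auto
    have "vector_derivative (\<lambda>t. D \<phi> (dyI m) \<rho> t) (at y) = complex_of_real \<rho> * D \<phi> (dyI (Suc m)) \<rho> y"
      using vector_derivative_at[OF D_dy[OF S r]] by (simp add: dyI_def)
    then show "(d_y_scaled ^^ Suc m) (Ffun \<phi>) \<rho> y = D \<phi> (dyI (Suc m)) \<rho> y"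
      using r by (simp add: d_y_scaled_def e)
  qed
qed

lemma drI_Suc: "drI (Suc n) L = concat (map drl (drI n L))"
  by (simp add: drI_def)

lemma R_iter:
  assumes S: "schwartz \<phi>" and X: "\<forall>\<rho>>0. \<forall>y. X \<rho> y = D \<phi> L \<rho> y"
  shows "\<forall>\<rho>>0. \<forall>y. (d_rho ^^ n) X \<rho> y = D \<phi> (drI n L) \<rho> y"
proof (induction n)
  case 0
  then show ?case using X by (simp add: drI_def)
next
  case (Suc n)
  show ?case
  proof (intro allI impI)
    fix \<rho> y :: real assume r: "\<rho> > 0"
    have "((\<lambda>r. (d_rho ^^ n) X r y) has_vector_derivative D \<phi> (drI (Suc n) L) \<rho> y) (at \<rho>)"
      unfolding drI_Suc
      apply (rule has_vector_derivative_transform_within_open[OF D_dr[OF S r] open_greaterThan[of 0]])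
      using r Suc by auto
    then show "(d_rho ^^ Suc n) X \<rho> y = D \<phi> (drI (Suc n) L) \<rho> y"
      by (simp add: d_rho_def vector_derivative_at)
  qed
qed



lemma mono0:
  fixes f f' :: "real \<Rightarrow> real"
  assumes "0 \<le> y" "\<And>t. (f has_real_derivative f' t) (at t)" "\<And>t. 0 \<le> t \<Longrightarrow> f' t \<ge> 0"
  shows "f 0 \<le> f y"
  using assms by (intro DERIV_nonneg_imp_nondecreasing[of 0 y f]) auto

lemma sinh_ge: "0 \<le> (y::real) \<Longrightarrow> y \<le> sinh y"
  using mono0[of y "\<lambda>t. sinh t - t" "\<lambda>t. cosh t - 1"] cosh_real_ge_1
  by (force intro!: derivative_eq_intros)

lemma cosh_m1: "0 \<le> (y::real) \<Longrightarrow> cosh y - 1 \<le> y * sinh y"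
  using mono0[of y "\<lambda>t. t * sinh t - cosh t + 1" "\<lambda>t. t * cosh t"]
  by (force intro!: derivative_eq_intros simp: algebra_simps)

lemma sinh_le_ycosh: "0 \<le> (y::real) \<Longrightarrow> sinh y \<le> y * cosh y"
  using mono0[of y "\<lambda>t. t * cosh t - sinh t" "\<lambda>t. t * sinh t"]
  by (force intro!: derivative_eq_intros simp: algebra_simps)

lemma sinh_cubic0: "0 \<le> (y::real) \<Longrightarrow> sinh y - y \<le> y ^ 3 * cosh y"
proof -
  assume y: "0 \<le> y"
  have "0 \<le> 3 * t\<^sup>2 * cosh t + t ^ 3 * sinh t - cosh t + 1" if t: "0 \<le> t" for t :: real
  proof -
    have "cosh t - 1 \<le> t * (t * cosh t)"
      using cosh_m1[OF t] sinh_le_ycosh[OF t] t by (meson mult_left_mono order_trans)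
    moreover have "0 \<le> t ^ 3 * sinh t" using t by simp
    moreover have "0 \<le> t * (t * cosh t)" using t by simp
    ultimately show ?thesis by (simp add: power2_eq_square algebra_simps)
  qed
  then show ?thesis
    using mono0[of y "\<lambda>t. t ^ 3 * cosh t - sinh t + t" "\<lambda>t. 3 * t\<^sup>2 * cosh t + t ^ 3 * sinh t - cosh t + 1", OF y]
    by (force intro!: derivative_eq_intros simp: algebra_simps)
qed

lemma abs_sinh_ge: "\<bar>y\<bar> \<le> \<bar>sinh (y::real)\<bar>"
  using sinh_ge[of "\<bar>y\<bar>"] by (simp flip: sinh_real_abs)

lemma sinh_cubic: "\<bar>sinh y - (y::real)\<bar> \<le> \<bar>y\<bar> ^ 3 * cosh y"
proof (cases "y \<ge> 0")
  case True then show ?thesis using sinh_cubic0[of y] sinh_ge[of y] by simp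
next
  case False
  then have "sinh (-y) - (-y) \<le> (-y) ^ 3 * cosh (-y)" "-y \<le> sinh (-y)"
    using sinh_cubic0[of "-y"] sinh_ge[of "-y"] by auto
  then show ?thesis using False by (simp add: abs_if)
qed

lemma cosh_le_1_abs_sinh: "cosh (y::real) \<le> 1 + \<bar>sinh y\<bar>"
proof -
  have "cosh y ^ 2 \<le> (1 + \<bar>sinh y\<bar>) ^ 2"
    using cosh_square_eq[of y] abs_ge_zero[of "sinh y"] by (simp add: power2_eq_square algebra_simps)
  then show ?thesis by (rule power2_le_imp_le) simp
qed

lemma cosh_m1_sq: "cosh (y::real) - 1 \<le> sinh y ^ 2"
proof -
  have "(cosh y - 1) * 1 \<le> (cosh y - 1) * (cosh y + 1)"
    using cosh_real_ge_1[of y] by (intro mult_left_mono) auto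
  also have "\<dots> = sinh y ^ 2" using cosh_square_eq[of y] by (simp add: power2_eq_square algebra_simps)
  finally show ?thesis by simp
qed

lemma cosh_le3: "\<bar>y\<bar> \<le> 1 \<Longrightarrow> cosh (y::real) \<le> 3"
proof -
  assume "\<bar>y\<bar> \<le> 1"
  have "cosh y = cosh \<bar>y\<bar>" by simp
  also have "\<dots> \<le> cosh 1" using \<open>\<bar>y\<bar> \<le> 1\<close> by (subst cosh_real_nonneg_le_iff) auto
  also have "\<dots> \<le> exp 1" using sinh_le_cosh_real[of 1] cosh_plus_sinh[of "1::real"] 
    by (smt (verit) cosh_real_ge_1 sinh_real_nonneg_iff)
  also have "\<dots> \<le> 3" by (rule exp_le)
  finally show ?thesis .
qed

lemma pow_sub_one: "1 \<le> (c::real) \<Longrightarrow> c ^ r - 1 \<le> real r * c ^ r * (c - 1)"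
proof (induction r)
  case 0 then show ?case by simp
next
  case (Suc r)
  have "c ^ Suc r - 1 = c * (c ^ r - 1) + (c - 1)" by (simp add: algebra_simps)
  also have "\<dots> \<le> c * (real r * c ^ r * (c - 1)) + c ^ Suc r * (c - 1)"
  proof (rule add_mono)
    show "c * (c ^ r - 1) \<le> c * (real r * c ^ r * (c - 1))" using Suc by (intro mult_left_mono) auto
    have "1 \<le> c ^ Suc r" using Suc.prems one_le_power by blast
    then show "c - 1 \<le> c ^ Suc r * (c - 1)" using Suc.prems
      by (metis diff_ge_0_iff_ge mult_cancel_right2 mult_right_mono)
  qed
  also have "\<dots> = real (Suc r) * c ^ Suc r * (c - 1)" by (simp add: algebra_simps)
  finally show ?case .
qed

lemma pow_r24: "(a::real) ^ (r + 2) * a ^ 2 = a ^ (r + 4)"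
proof -
  have "r + 4 = (r + 2) + (2::nat)" by simp
  then show ?thesis by (metis power_add)
qed

lemma mvt_c:
  fixes h h' :: "real \<Rightarrow> complex"
  assumes dh: "\<And>z. (h has_vector_derivative h' z) (at z)"
    and B: "\<And>z. z \<in> closed_segment a b \<Longrightarrow> norm (h' z) \<le> B"
  shows "norm (h a - h b) \<le> B * \<bar>a - b\<bar>"
proof -
  have "norm (h a - h b) \<le> B * norm (a - b)"
  proof (rule differentiable_bound[of "closed_segment a b" h "\<lambda>z u. u *\<^sub>R h' z"])
    show "convex (closed_segment a b)" by simp
    show "(h has_derivative (\<lambda>u. u *\<^sub>R h' z)) (at z within closed_segment a b)" for z
      using dh[of z] unfolding has_vector_derivative_def by (rule has_derivative_at_withinI)
    show "onorm (\<lambda>u. u *\<^sub>R h' z) \<le> B" if "z \<in> closed_segment a b" for z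
      using onorm_scaleR_left[OF bounded_linear_ident, of "h' z"] B[OF that] by (simp add: onorm_id)
  qed auto
  then show ?thesis by simp
qed

lemma cancel:
  fixes h h' :: "real \<Rightarrow> complex" and \<rho> y H :: real and r :: nat
  assumes dh: "\<And>z. (h has_vector_derivative h' z) (at z)"
    and Hh: "\<And>z. (1 + \<bar>z\<bar>) ^ (r + 4) * norm (h z) \<le> H"
    and Hd: "\<And>z. (1 + \<bar>z\<bar>) ^ 5 * norm (h' z) \<le> H"
    and r1: "1 \<le> \<rho>"
  shows "norm (h (\<rho> * y) - complex_of_real (cosh y ^ r) * h (\<rho> * sinh y)) * (\<rho>\<^sup>2 * (1 + \<rho> * \<bar>y\<bar>)\<^sup>2)
     \<le> (real r + 3) * H"
proof -
  define x where "x = \<rho> * y"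
  define s where "s = \<rho> * sinh y"
  have ax: "\<bar>x\<bar> = \<rho> * \<bar>y\<bar>" using r1 by (simp add: x_def abs_mult)
  have axs: "\<bar>x\<bar> \<le> \<bar>s\<bar>" using r1 abs_sinh_ge[of y] by (simp add: x_def s_def abs_mult)
  have H0: "0 \<le> H"
  proof -
    have "0 \<le> (1 + \<bar>0::real\<bar>) ^ (r + 4) * norm (h 0)" by simp
    then show ?thesis using Hh[of 0] by linarith
  qed
  define X where "X = 1 + \<bar>x\<bar>"
  have X1: "1 \<le> X" by (simp add: X_def)
  have decay: "X ^ m * norm (h z) \<le> H" if "\<bar>x\<bar> \<le> \<bar>z\<bar>" "m \<le> r + 4" for z m
  proof -
    have "X ^ m \<le> (1 + \<bar>z\<bar>) ^ m" unfolding X_def using that by (intro power_mono) auto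
    also have "\<dots> \<le> (1 + \<bar>z\<bar>) ^ (r + 4)" using that by (intro power_increasing) auto
    finally have "X ^ m \<le> (1 + \<bar>z\<bar>) ^ (r + 4)" .
    then have "X ^ m * norm (h z) \<le> (1 + \<bar>z\<bar>) ^ (r + 4) * norm (h z)" by (rule mult_right_mono) simp
    then show ?thesis using Hh[of z] by linarith
  qed
  have decd: "X ^ 5 * norm (h' z) \<le> H" if "\<bar>x\<bar> \<le> \<bar>z\<bar>" for z
  proof -
    have "X ^ 5 \<le> (1 + \<bar>z\<bar>) ^ 5" unfolding X_def using that by (intro power_mono) auto
    then have "X ^ 5 * norm (h' z) \<le> (1 + \<bar>z\<bar>) ^ 5 * norm (h' z)" by (rule mult_right_mono) simp
    then show ?thesis using Hd[of z] by linarith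
  qed
  have rho2: "\<rho>\<^sup>2 * (1 + \<rho> * \<bar>y\<bar>)\<^sup>2 = \<rho>\<^sup>2 * X\<^sup>2" by (simp add: X_def ax)
  have T2: "norm (h s - complex_of_real (cosh y ^ r) * h s) * (\<rho>\<^sup>2 * X\<^sup>2) \<le> real r * H"
  proof -
    have c1: "1 \<le> cosh y" by (rule cosh_real_ge_1)
    have "norm (h s - complex_of_real (cosh y ^ r) * h s) = (cosh y ^ r - 1) * norm (h s)"
    proof -
      have "h s - complex_of_real (cosh y ^ r) * h s = complex_of_real (1 - cosh y ^ r) * h s"
        by (simp add: algebra_simps)
      moreover have "\<bar>1 - cosh y ^ r\<bar> = cosh y ^ r - 1" using c1 one_le_power[OF c1, of r] by simp
      ultimately show ?thesis by (metis norm_mult norm_of_real)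
    qed
    moreover have "(cosh y ^ r - 1) * \<rho>\<^sup>2 \<le> real r * (1 + \<bar>s\<bar>) ^ (r + 2)"
    proof -
      have "(cosh y ^ r - 1) * \<rho>\<^sup>2 \<le> (real r * cosh y ^ r * (cosh y - 1)) * \<rho>\<^sup>2"
        using pow_sub_one[OF c1, of r] by (intro mult_right_mono) auto
      also have "\<dots> \<le> (real r * cosh y ^ r * sinh y ^ 2) * \<rho>\<^sup>2"
        using cosh_m1_sq[of y] c1 by (intro mult_right_mono mult_left_mono) auto
      also have "\<dots> = real r * cosh y ^ r * s\<^sup>2"
        by (simp add: s_def power_mult_distrib)
      also have "\<dots> \<le> real r * (1 + \<bar>s\<bar>) ^ r * (1 + \<bar>s\<bar>)\<^sup>2"
      proof -
        have "cosh y \<le> 1 + \<bar>s\<bar>"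
        proof -
          have "\<bar>sinh y\<bar> \<le> \<rho> * \<bar>sinh y\<bar>" using r1 mult_right_mono[OF r1 abs_ge_zero[of "sinh y"]] by simp
          then show ?thesis using cosh_le_1_abs_sinh[of y] r1 by (simp add: s_def abs_mult)
        qed
        then have "cosh y ^ r \<le> (1 + \<bar>s\<bar>) ^ r" using c1 by (intro power_mono) auto
        moreover have "s\<^sup>2 \<le> (1 + \<bar>s\<bar>)\<^sup>2"
        proof -
          have "\<bar>s\<bar>\<^sup>2 \<le> (1 + \<bar>s\<bar>)\<^sup>2" by (intro power_mono) auto
          then show ?thesis by simp
        qed
        ultimately show ?thesis by (intro mult_mono) auto
      qed
      also have "\<dots> = real r * (1 + \<bar>s\<bar>) ^ (r + 2)" by (simp add: power_add power2_eq_square)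
      finally show ?thesis .
    qed
    ultimately have "norm (h s - complex_of_real (cosh y ^ r) * h s) * (\<rho>\<^sup>2 * X\<^sup>2)
        \<le> real r * ((1 + \<bar>s\<bar>) ^ (r + 2) * X\<^sup>2 * norm (h s))"
    proof -
      assume e: "norm (h s - complex_of_real (cosh y ^ r) * h s) = (cosh y ^ r - 1) * norm (h s)"
        and i: "(cosh y ^ r - 1) * \<rho>\<^sup>2 \<le> real r * (1 + \<bar>s\<bar>) ^ (r + 2)"
      have "norm (h s - complex_of_real (cosh y ^ r) * h s) * (\<rho>\<^sup>2 * X\<^sup>2) = ((cosh y ^ r - 1) * \<rho>\<^sup>2) * (X\<^sup>2 * norm (h s))"
        by (subst e) (simp add: algebra_simps)
      also have "\<dots> \<le> (real r * (1 + \<bar>s\<bar>) ^ (r + 2)) * (X\<^sup>2 * norm (h s))"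
        using i by (rule mult_right_mono) simp
      finally show ?thesis by (simp add: algebra_simps)
    qed
    also have "\<dots> \<le> real r * H"
    proof (intro mult_left_mono)
      have "X\<^sup>2 \<le> (1 + \<bar>s\<bar>)\<^sup>2" unfolding X_def using axs by (intro power_mono) auto
      then have "(1 + \<bar>s\<bar>) ^ (r + 2) * X\<^sup>2 * norm (h s) \<le> (1 + \<bar>s\<bar>) ^ (r + 2) * (1 + \<bar>s\<bar>)\<^sup>2 * norm (h s)"
        by (intro mult_right_mono mult_left_mono) auto
      also have "\<dots> = (1 + \<bar>s\<bar>) ^ (r + 4) * norm (h s)" by (simp only: pow_r24)
      also have "\<dots> \<le> H" by (rule Hh)
      finally show "(1 + \<bar>s\<bar>) ^ (r + 2) * X\<^sup>2 * norm (h s) \<le> H" .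
    qed auto
    finally show ?thesis .
  qed
  have T1: "norm (h x - h s) * (\<rho>\<^sup>2 * X\<^sup>2) \<le> 3 * H"
  proof (cases "\<bar>y\<bar> \<ge> 1")
    case True
    have "\<rho>\<^sup>2 \<le> X\<^sup>2"
    proof -
      have "\<rho> * 1 \<le> \<rho> * \<bar>y\<bar>" using True r1 by (intro mult_left_mono) auto
      then have "\<rho> \<le> X" using ax X_def by simp
      then show ?thesis using r1 by (intro power_mono) auto
    qed
    then have "\<rho>\<^sup>2 * X\<^sup>2 \<le> X\<^sup>2 * X\<^sup>2" by (intro mult_right_mono) auto
    also have "X\<^sup>2 * X\<^sup>2 = X ^ 4" by (simp flip: power_add)
    finally have "\<rho>\<^sup>2 * X\<^sup>2 \<le> X ^ 4" .
    moreover have "norm (h x - h s) \<le> norm (h x) + norm (h s)" by (rule norm_triangle_ineq4)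
    ultimately have "norm (h x - h s) * (\<rho>\<^sup>2 * X\<^sup>2) \<le> X ^ 4 * norm (h x) + X ^ 4 * norm (h s)"
    proof -
      assume a1: "\<rho>\<^sup>2 * X\<^sup>2 \<le> X ^ 4" and a2: "norm (h x - h s) \<le> norm (h x) + norm (h s)"
      have "norm (h x - h s) * (\<rho>\<^sup>2 * X\<^sup>2) \<le> (norm (h x) + norm (h s)) * X ^ 4"
        using a1 a2 by (intro mult_mono) auto
      then show ?thesis by (simp add: algebra_simps)
    qed
    also have "\<dots> \<le> H + H"
    proof (rule add_mono)
      show "X ^ 4 * norm (h x) \<le> H" by (rule decay) auto
      show "X ^ 4 * norm (h s) \<le> H" by (rule decay) (use axs in auto)
    qed
    finally show ?thesis using H0 by simp
  next
    case False
    have seg: "\<bar>x\<bar> \<le> \<bar>z\<bar>" if "z \<in> closed_segment x s" for z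
    proof (cases "y \<ge> 0")
      case True
      then have "0 \<le> x" "x \<le> s" using r1 sinh_ge[of y] by (auto simp: x_def s_def)
      then show ?thesis using that by (auto simp: closed_segment_eq_real_ivl)
    next
      case False
      then have "x \<le> 0" "s \<le> x" using r1 sinh_ge[of "-y"]
        by (auto simp: x_def s_def mult_nonneg_nonpos intro: mult_left_mono)
      then show ?thesis using that by (auto simp: closed_segment_eq_real_ivl split: if_splits)
    qed
    have X5: "0 < X ^ 5" using X1 by simp
    have "norm (h x - h s) \<le> (H / X ^ 5) * \<bar>x - s\<bar>"
    proof (rule mvt_c[OF dh])
      fix z assume "z \<in> closed_segment x s"
      from decd[OF seg[OF this]] X5 show "norm (h' z) \<le> H / X ^ 5" by (simp add: pos_le_divide_eq mult.commute)
    qed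
    moreover have "\<bar>x - s\<bar> \<le> 3 * \<bar>x\<bar> ^ 3 / \<rho>\<^sup>2"
    proof -
      have "x - s = \<rho> * (y - sinh y)" by (simp add: x_def s_def right_diff_distrib)
      then have "\<bar>x - s\<bar> = \<rho> * \<bar>sinh y - y\<bar>" using r1 abs_minus_commute[of y "sinh y"] by (simp add: abs_mult)
      also have "\<dots> \<le> \<rho> * (\<bar>y\<bar> ^ 3 * 3)"
      proof (rule mult_left_mono)
        have "\<bar>y\<bar> ^ 3 * cosh y \<le> \<bar>y\<bar> ^ 3 * 3" using cosh_le3[of y] False by (intro mult_left_mono) auto
        then show "\<bar>sinh y - y\<bar> \<le> \<bar>y\<bar> ^ 3 * 3" using sinh_cubic[of y] by linarith
      qed (use r1 in auto)
      also have "\<dots> = 3 * \<bar>x\<bar> ^ 3 / \<rho>\<^sup>2" using r1 by (simp add: ax power_mult_distrib power2_eq_square power3_eq_cube field_simps)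
      finally show ?thesis .
    qed
    ultimately have "norm (h x - h s) \<le> (H / X ^ 5) * (3 * \<bar>x\<bar> ^ 3 / \<rho>\<^sup>2)"
    proof -
      assume a1: "norm (h x - h s) \<le> (H / X ^ 5) * \<bar>x - s\<bar>" and a2: "\<bar>x - s\<bar> \<le> 3 * \<bar>x\<bar> ^ 3 / \<rho>\<^sup>2"
      have "(H / X ^ 5) * \<bar>x - s\<bar> \<le> (H / X ^ 5) * (3 * \<bar>x\<bar> ^ 3 / \<rho>\<^sup>2)"
        using a2 H0 X5 by (intro mult_left_mono) auto
      then show ?thesis using a1 by linarith
    qed
    then have "norm (h x - h s) * (\<rho>\<^sup>2 * X\<^sup>2) \<le> (H / X ^ 5) * (3 * \<bar>x\<bar> ^ 3 / \<rho>\<^sup>2) * (\<rho>\<^sup>2 * X\<^sup>2)"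
      by (intro mult_right_mono) auto
    also have "\<dots> = 3 * H * (\<bar>x\<bar> ^ 3 / X ^ 3)"
    proof -
      have X53: "X ^ 5 = X\<^sup>2 * X ^ 3" by (simp flip: power_add)
      obtain A B C where A: "A = X\<^sup>2" and B: "B = X ^ 3" and C: "C = \<bar>x\<bar> ^ 3" by blast
      have "A > 0" "B > 0" using X1 A B by auto
      moreover have "\<rho>\<^sup>2 > 0" using r1 by simp
      ultimately have "(H / (A * B)) * (3 * C / \<rho>\<^sup>2) * (\<rho>\<^sup>2 * A) = 3 * H * (C / B)"
        by (simp add: field_simps)
      then show ?thesis unfolding X53 A B C .
    qed
    also have "\<dots> \<le> 3 * H * 1"
    proof -
      have "\<bar>x\<bar> ^ 3 \<le> X ^ 3" unfolding X_def by (intro power_mono) auto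
      then show ?thesis using H0 X5 by (intro mult_left_mono) auto
    qed
    finally show ?thesis by simp
  qed
  have "norm (h x - complex_of_real (cosh y ^ r) * h s) \<le> norm (h x - h s) + norm (h s - complex_of_real (cosh y ^ r) * h s)"
    using norm_triangle_ineq[of "h x - h s" "h s - complex_of_real (cosh y ^ r) * h s"] by simp
  then have "norm (h x - complex_of_real (cosh y ^ r) * h s) * (\<rho>\<^sup>2 * X\<^sup>2)
      \<le> norm (h x - h s) * (\<rho>\<^sup>2 * X\<^sup>2) + norm (h s - complex_of_real (cosh y ^ r) * h s) * (\<rho>\<^sup>2 * X\<^sup>2)"
    by (simp add: distrib_right[symmetric] mult_right_mono)
  also have "\<dots> \<le> 3 * H + real r * H" using T1 T2 by (rule add_mono)
  finally show ?thesis unfolding rho2 x_def s_def by (simp add: algebra_simps)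
qed



lemma semi_le:
  assumes S: "schwartz \<phi>" and kN: "k \<le> N" and lN: "l \<le> N"
  shows "\<bar>x\<bar> ^ k * norm (hderiv l \<phi> x) \<le> schwartz_norm N \<phi>"
proof -
  from S obtain C where C: "\<forall>x. \<bar>x\<bar> ^ k * norm (hderiv l \<phi> x) \<le> C" unfolding schwartz_def by blast
  then have bdd: "bdd_above (range (\<lambda>x. \<bar>x\<bar> ^ k * norm (hderiv l \<phi> x)))" by (auto intro: bdd_aboveI2)
  have "\<bar>x\<bar> ^ k * norm (hderiv l \<phi> x) \<le> schwartz_seminorm k l \<phi>"
    unfolding schwartz_seminorm_def by (rule cSUP_upper[OF _ bdd]) simp
  also have "\<dots> \<le> schwartz_norm N \<phi>"
    unfolding schwartz_norm_def using kN lN by (intro Max_ge) (auto intro!: image_eqI[where x="(k,l)"])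
  finally show ?thesis .
qed

lemma sN_nonneg: "schwartz \<phi> \<Longrightarrow> 0 \<le> schwartz_norm N \<phi>"
proof -
  assume S: "schwartz \<phi>"
  have "\<bar>0::real\<bar> ^ 0 * norm (hderiv 0 \<phi> 0) \<le> schwartz_norm N \<phi>" by (rule semi_le[OF S]) auto
  moreover have "0 \<le> \<bar>0::real\<bar> ^ 0 * norm (hderiv 0 \<phi> 0)" by simp
  ultimately show ?thesis by linarith
qed

lemma one_plus_pow: "0 \<le> (t::real) \<Longrightarrow> (1 + t) ^ K \<le> 2 ^ K * (1 + t ^ K)"
proof (cases "t \<le> 1")
  case True
  assume t: "0 \<le> t"
  have "(1 + t) ^ K \<le> 2 ^ K" using True t by (intro power_mono) auto
  also have "\<dots> \<le> 2 ^ K * (1 + t ^ K)" using t by simp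
  finally show ?thesis .
next
  case False
  assume t: "0 \<le> t"
  have "(1 + t) ^ K \<le> (2 * t) ^ K" using False t by (intro power_mono) auto
  also have "\<dots> \<le> 2 ^ K * (1 + t ^ K)" by (simp add: power_mult_distrib)
  finally show ?thesis .
qed

lemma B0:
  assumes S: "schwartz \<phi>" and KN: "K + e \<le> N" and lN: "l \<le> N"
  shows "(1 + \<bar>z\<bar>) ^ K * \<bar>z\<bar> ^ e * norm (hderiv l \<phi> z) \<le> 2 ^ (K + 1) * schwartz_norm N \<phi>"
proof -
  let ?s = "schwartz_norm N \<phi>" and ?n = "norm (hderiv l \<phi> z)"
  have a: "\<bar>z\<bar> ^ e * ?n \<le> ?s" using semi_le[OF S _ lN, of e] KN by simp
  have b: "\<bar>z\<bar> ^ (K + e) * ?n \<le> ?s" using semi_le[OF S KN lN] by simp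
  have "(1 + \<bar>z\<bar>) ^ K * \<bar>z\<bar> ^ e * ?n \<le> (2 ^ K * (1 + \<bar>z\<bar> ^ K)) * (\<bar>z\<bar> ^ e * ?n)"
    using one_plus_pow[of "\<bar>z\<bar>" K] by (simp only: mult.assoc[symmetric]) (intro mult_right_mono, auto)
  also have "\<dots> = 2 ^ K * (\<bar>z\<bar> ^ e * ?n + \<bar>z\<bar> ^ (K + e) * ?n)" by (simp add: algebra_simps power_add)
  also have "\<dots> \<le> 2 ^ K * (?s + ?s)" using a b by (intro mult_left_mono add_mono) auto
  also have "\<dots> = 2 ^ (K + 1) * ?s" by simp
  finally show ?thesis .
qed

lemma powr_le1: "1 \<le> (\<rho>::real) \<Longrightarrow> e \<le> 0 \<Longrightarrow> \<rho> powr e \<le> 1"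
  using powr_mono[of e 0 \<rho>] by simp

lemma powr_m2: "1 \<le> (\<rho>::real) \<Longrightarrow> e \<le> -2 \<Longrightarrow> \<rho> powr e * \<rho>\<^sup>2 \<le> 1"
proof -
  assume r: "1 \<le> \<rho>" and e: "e \<le> -2"
  have "\<rho>\<^sup>2 = \<rho> powr 2" using r by (simp add: powr_numeral)
  then have "\<rho> powr e * \<rho>\<^sup>2 = \<rho> powr (e + 2)" by (simp add: powr_add)
  also have "\<dots> \<le> 1" using r e by (intro powr_le1) auto
  finally show ?thesis .
qed

lemma powr_split: "0 < (\<rho>::real) \<Longrightarrow> \<rho> powr e = \<rho> powr (e - real q) * \<rho> ^ q"
  by (simp add: powr_diff powr_realpow)

lemma term_bound_a:
  assumes S: "schwartz \<phi>" and r1: "1 \<le> \<rho>"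
    and kl: "0 < k + l" and w: "a - int i - int k \<le> -2"
    and nd: "i + j + k + l + p + 6 \<le> N"
  shows "norm (tm \<phi> (\<lambda>y. y) (\<lambda>_. 1) (\<lambda>_. 0) (\<lambda>_. 0) (Tm c a i j k l p) \<rho> y
             - tm \<phi> sinh cosh sinh cosh (Tm c a i j k l p) \<rho> y) * (\<rho>\<^sup>2 * (1 + \<rho> * \<bar>y\<bar>)\<^sup>2)
     \<le> \<bar>c\<bar> * 2 ^ (j + l + 3) * schwartz_norm N \<phi>"
proof -
  define q where "q = i + k"
  define r where "r = j + l"
  define s where "s = \<rho> * sinh y"
  define n where "n = norm (hderiv p \<phi> s)"
  have r0: "0 < \<rho>" using r1 by simp
  have t1: "tm \<phi> (\<lambda>y. y) (\<lambda>_. 1) (\<lambda>_. 0) (\<lambda>_. 0) (Tm c a i j k l p) \<rho> y = 0"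
    using kl by (cases k; cases l) auto
  have "norm (tm \<phi> sinh cosh sinh cosh (Tm c a i j k l p) \<rho> y)
      = \<bar>c\<bar> * (\<rho> powr of_int a * \<bar>sinh y\<bar> ^ q) * cosh y ^ r * n"
    by (simp add: q_def r_def s_def n_def norm_mult norm_power abs_mult power_add power_abs mult_ac)
  also have "\<rho> powr of_int a * \<bar>sinh y\<bar> ^ q = \<rho> powr (of_int a - real q) * \<bar>s\<bar> ^ q"
    using powr_split[OF r0, of "of_int a" q] r0 by (simp add: s_def abs_mult power_mult_distrib)
  finally have eq: "norm (tm \<phi> sinh cosh sinh cosh (Tm c a i j k l p) \<rho> y)
      = \<bar>c\<bar> * \<rho> powr (of_int a - real q) * (\<bar>s\<bar> ^ q * cosh y ^ r * n)" by (simp add: mult_ac)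
  have ys: "1 + \<rho> * \<bar>y\<bar> \<le> 1 + \<bar>s\<bar>"
    using abs_sinh_ge[of y] r0 by (simp add: s_def abs_mult)
  have cs: "cosh y \<le> 1 + \<bar>s\<bar>"
  proof -
    have "\<bar>sinh y\<bar> \<le> \<rho> * \<bar>sinh y\<bar>" using mult_right_mono[OF r1 abs_ge_zero[of "sinh y"]] by simp
    then show ?thesis using cosh_le_1_abs_sinh[of y] r0 by (simp add: s_def abs_mult)
  qed
  have P: "\<rho> powr (of_int a - real q) * \<rho>\<^sup>2 \<le> 1"
    using r1 w by (intro powr_m2) (auto simp: q_def)
  have Q: "\<bar>s\<bar> ^ q * cosh y ^ r * n * (1 + \<rho> * \<bar>y\<bar>)\<^sup>2 \<le> (1 + \<bar>s\<bar>) ^ (r + 2) * \<bar>s\<bar> ^ q * n"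
  proof -
    have "cosh y ^ r * (1 + \<rho> * \<bar>y\<bar>)\<^sup>2 \<le> (1 + \<bar>s\<bar>) ^ r * (1 + \<bar>s\<bar>)\<^sup>2"
    proof (rule mult_mono)
      show "cosh y ^ r \<le> (1 + \<bar>s\<bar>) ^ r" using cs by (intro power_mono) auto
      show "(1 + \<rho> * \<bar>y\<bar>)\<^sup>2 \<le> (1 + \<bar>s\<bar>)\<^sup>2" using ys r0 by (intro power_mono) auto
    qed auto
    also have "\<dots> = (1 + \<bar>s\<bar>) ^ (r + 2)" by (simp add: power_add power2_eq_square)
    finally have "cosh y ^ r * (1 + \<rho> * \<bar>y\<bar>)\<^sup>2 \<le> (1 + \<bar>s\<bar>) ^ (r + 2)" .
    then have "(\<bar>s\<bar> ^ q * n) * (cosh y ^ r * (1 + \<rho> * \<bar>y\<bar>)\<^sup>2) \<le> (\<bar>s\<bar> ^ q * n) * (1 + \<bar>s\<bar>) ^ (r + 2)"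
      by (intro mult_left_mono) (auto simp: n_def)
    then show ?thesis by (simp add: mult_ac)
  qed
  have Bd: "(1 + \<bar>s\<bar>) ^ (r + 2) * \<bar>s\<bar> ^ q * n \<le> 2 ^ (r + 3) * schwartz_norm N \<phi>"
    using B0[OF S, of "r + 2" q N p s] nd by (simp add: n_def q_def r_def power_add)
  have "norm (tm \<phi> (\<lambda>y. y) (\<lambda>_. 1) (\<lambda>_. 0) (\<lambda>_. 0) (Tm c a i j k l p) \<rho> y
             - tm \<phi> sinh cosh sinh cosh (Tm c a i j k l p) \<rho> y) * (\<rho>\<^sup>2 * (1 + \<rho> * \<bar>y\<bar>)\<^sup>2)
      = \<bar>c\<bar> * (\<rho> powr (of_int a - real q) * \<rho>\<^sup>2) * (\<bar>s\<bar> ^ q * cosh y ^ r * n * (1 + \<rho> * \<bar>y\<bar>)\<^sup>2)"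
    by (simp only: t1 diff_0 norm_minus_cancel eq) (simp add: mult_ac)
  also have "\<dots> \<le> \<bar>c\<bar> * 1 * ((1 + \<bar>s\<bar>) ^ (r + 2) * \<bar>s\<bar> ^ q * n)"
    by (rule mult_mono[OF mult_left_mono[OF P] Q]) (auto simp: n_def)
  also have "\<dots> \<le> \<bar>c\<bar> * (2 ^ (r + 3) * schwartz_norm N \<phi>)"
    using Bd by (simp add: mult_left_mono)
  finally show ?thesis by (simp add: r_def mult_ac)
qed

lemma term_bound_b:
  assumes S: "schwartz \<phi>" and r1: "1 \<le> \<rho>"
    and w: "a - int i \<le> 0"
    and nd: "i + j + p + 6 \<le> N"
  shows "norm (tm \<phi> (\<lambda>y. y) (\<lambda>_. 1) (\<lambda>_. 0) (\<lambda>_. 0) (Tm c a i j 0 0 p) \<rho> y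
             - tm \<phi> sinh cosh sinh cosh (Tm c a i j 0 0 p) \<rho> y) * (\<rho>\<^sup>2 * (1 + \<rho> * \<bar>y\<bar>)\<^sup>2)
     \<le> \<bar>c\<bar> * ((real j + 3) * ((real i + 1) * 2 ^ (j + 6) * schwartz_norm N \<phi>))"
proof -
  let ?s = "schwartz_norm N \<phi>"
  have s0: "0 \<le> ?s" by (rule sN_nonneg[OF S])
  have r0: "0 < \<rho>" using r1 by simp
  define h where "h z = complex_of_real (z ^ i) * hderiv p \<phi> z" for z
  define h' where "h' z = complex_of_real (z ^ i) * hderiv (Suc p) \<phi> z + complex_of_real (real i * z ^ (i - 1)) * hderiv p \<phi> z" for z
  define H where "H = (real i + 1) * 2 ^ (j + 6) * ?s"
  have dh: "(h has_vector_derivative h' z) (at z)" for z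
  proof -
    have d: "((\<lambda>z. z ^ i) has_real_derivative (real i * z ^ (i - 1))) (at z)"
      by (rule derivative_eq_intros refl | simp)+
    show ?thesis unfolding h_def h'_def
      by (rule has_vector_derivative_mult[OF has_vector_derivative_of_real[OF d] hderiv_has[OF S]])
  qed
  have Hh: "(1 + \<bar>z\<bar>) ^ (j + 4) * norm (h z) \<le> H" for z
  proof -
    have "(1 + \<bar>z\<bar>) ^ (j + 4) * norm (h z) = (1 + \<bar>z\<bar>) ^ (j + 4) * \<bar>z\<bar> ^ i * norm (hderiv p \<phi> z)"
      by (simp add: h_def norm_mult norm_power power_abs)
    also have "\<dots> \<le> 2 ^ (j + 4 + 1) * ?s" by (rule B0[OF S]) (use nd in auto)
    also have "\<dots> \<le> H" unfolding H_def using s0 by (intro mult_right_mono) (auto simp: power_add)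
    finally show ?thesis .
  qed
  have Hd: "(1 + \<bar>z\<bar>) ^ 5 * norm (h' z) \<le> H" for z
  proof -
    have "norm (h' z) \<le> \<bar>z\<bar> ^ i * norm (hderiv (Suc p) \<phi> z) + real i * (\<bar>z\<bar> ^ (i - 1) * norm (hderiv p \<phi> z))"
      unfolding h'_def using norm_triangle_ineq[of "complex_of_real (z ^ i) * hderiv (Suc p) \<phi> z" "complex_of_real (real i * z ^ (i - 1)) * hderiv p \<phi> z"]
      by (simp add: norm_mult norm_power power_abs abs_mult)
    then have "(1 + \<bar>z\<bar>) ^ 5 * norm (h' z) \<le> (1 + \<bar>z\<bar>) ^ 5 * (\<bar>z\<bar> ^ i * norm (hderiv (Suc p) \<phi> z) + real i * (\<bar>z\<bar> ^ (i - 1) * norm (hderiv p \<phi> z)))"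
      by (intro mult_left_mono) auto
    also have "\<dots> = (1 + \<bar>z\<bar>) ^ 5 * \<bar>z\<bar> ^ i * norm (hderiv (Suc p) \<phi> z) + real i * ((1 + \<bar>z\<bar>) ^ 5 * \<bar>z\<bar> ^ (i - 1) * norm (hderiv p \<phi> z))"
      by (simp add: algebra_simps)
    also have "\<dots> \<le> 2 ^ (5 + 1) * ?s + real i * (2 ^ (5 + 1) * ?s)"
    proof (rule add_mono)
      show "(1 + \<bar>z\<bar>) ^ 5 * \<bar>z\<bar> ^ i * norm (hderiv (Suc p) \<phi> z) \<le> 2 ^ (5 + 1) * ?s"
        by (rule B0[OF S]) (use nd in auto)
      show "real i * ((1 + \<bar>z\<bar>) ^ 5 * \<bar>z\<bar> ^ (i - 1) * norm (hderiv p \<phi> z)) \<le> real i * (2 ^ (5 + 1) * ?s)"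
        by (intro mult_left_mono B0[OF S]) (use nd in auto)
    qed
    also have "\<dots> = (real i + 1) * 2 ^ 6 * ?s" by (simp add: algebra_simps)
    also have "\<dots> \<le> H" unfolding H_def using s0
      by (intro mult_right_mono mult_left_mono) (auto simp: power_add)
    finally show ?thesis .
  qed
  have canc: "norm (h (\<rho> * y) - complex_of_real (cosh y ^ j) * h (\<rho> * sinh y)) * (\<rho>\<^sup>2 * (1 + \<rho> * \<bar>y\<bar>)\<^sup>2) \<le> (real j + 3) * H"
    by (rule cancel[OF dh Hh Hd r1])
  have split: "tm \<phi> (\<lambda>y. y) (\<lambda>_. 1) (\<lambda>_. 0) (\<lambda>_. 0) (Tm c a i j 0 0 p) \<rho> y
             - tm \<phi> sinh cosh sinh cosh (Tm c a i j 0 0 p) \<rho> y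
     = complex_of_real (c * \<rho> powr (of_int a - real i)) * (h (\<rho> * y) - complex_of_real (cosh y ^ j) * h (\<rho> * sinh y))"
  proof -
    have e: "\<rho> powr of_int a = \<rho> powr (of_int a - real i) * \<rho> ^ i" by (rule powr_split[OF r0])
    obtain P where P: "P = \<rho> powr (of_int a - real i)" by blast
    show ?thesis unfolding h_def tm.simps e P[symmetric]
      by (simp add: power_mult_distrib algebra_simps)
  qed
  have pw: "\<rho> powr (of_int a - real i) \<le> 1" using r1 w by (intro powr_le1) auto
  have "norm (tm \<phi> (\<lambda>y. y) (\<lambda>_. 1) (\<lambda>_. 0) (\<lambda>_. 0) (Tm c a i j 0 0 p) \<rho> y
             - tm \<phi> sinh cosh sinh cosh (Tm c a i j 0 0 p) \<rho> y) * (\<rho>\<^sup>2 * (1 + \<rho> * \<bar>y\<bar>)\<^sup>2)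
     = (\<bar>c\<bar> * \<rho> powr (of_int a - real i)) * (norm (h (\<rho> * y) - complex_of_real (cosh y ^ j) * h (\<rho> * sinh y)) * (\<rho>\<^sup>2 * (1 + \<rho> * \<bar>y\<bar>)\<^sup>2))"
    unfolding split norm_mult norm_of_real by (simp add: abs_mult mult_ac)
  also have "\<dots> \<le> (\<bar>c\<bar> * 1) * ((real j + 3) * H)"
    by (rule mult_mono[OF mult_left_mono[OF pw] canc]) auto
  finally show ?thesis unfolding H_def by simp
qed



lemma ennreal_half: "ennreal (1 / (1 + \<rho> * y)\<^sup>2) * indicator {0..} y = indicator {0..} y * ennreal (1 / (1 + \<rho> * y)\<^sup>2)"
  by (simp add: mult.commute)

lemma half_int:
  assumes r: "0 < (\<rho>::real)"
  shows "(\<integral>\<^sup>+y. ennreal (1 / (1 + \<rho> * y)\<^sup>2) * indicator {0..} y \<partial>lborel) = ennreal (1 / \<rho>)"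
proof -
  have "(\<integral>\<^sup>+y. ennreal (1 / (1 + \<rho> * y)\<^sup>2) * indicator {0..} y \<partial>lborel)
      = ennreal (1 / \<rho> - (1 / \<rho> - 1 / (\<rho> * (1 + \<rho> * 0))))"
  proof (rule nn_integral_FTC_atLeast[where F="\<lambda>x. 1 / \<rho> - 1 / (\<rho> * (1 + \<rho> * x))" and T="1/\<rho>" and a=0 and f="\<lambda>y. 1 / (1 + \<rho> * y)\<^sup>2"])
    show "(\<lambda>y. 1 / (1 + \<rho> * y)\<^sup>2) \<in> borel_measurable borel" by measurable
    show "((\<lambda>x. 1 / \<rho> - 1 / (\<rho> * (1 + \<rho> * x))) has_real_derivative 1 / (1 + \<rho> * x)\<^sup>2) (at x)" if "0 \<le> x" for x
    proof -
      have u: "1 + \<rho> * x > 0" using r that by (simp add: add_pos_nonneg)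
      have d1: "((\<lambda>x. \<rho> * (1 + \<rho> * x)) has_real_derivative \<rho> * \<rho>) (at x)"
        by (auto intro!: derivative_eq_intros)
      have nz: "\<rho> * (1 + \<rho> * x) \<noteq> 0" using u r by simp
      have d2: "((\<lambda>x. 1 / \<rho> - inverse (\<rho> * (1 + \<rho> * x))) has_real_derivative
          (0 - - (\<rho> * \<rho> * inverse ((\<rho> * (1 + \<rho> * x)) ^ Suc (Suc 0))))) (at x)"
        by (rule DERIV_diff[OF DERIV_const DERIV_inverse_fun[OF d1 nz]])
      have e: "0 - - (\<rho> * \<rho> * inverse ((\<rho> * (1 + \<rho> * x)) ^ Suc (Suc 0))) = 1 / (1 + \<rho> * x)\<^sup>2"
      proof -
        have g: "0 - - (\<rho> * \<rho> * inverse ((\<rho> * w) ^ Suc (Suc 0))) = 1 / w\<^sup>2" if "w \<noteq> 0" for w :: real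
          using that r by (simp add: power_mult_distrib field_simps power2_eq_square)
        show ?thesis using g[of "1 + \<rho> * x"] u by simp
      qed
      show ?thesis using d2 unfolding e by (simp add: divide_inverse)
    qed
    show "0 \<le> 1 / (1 + \<rho> * x)\<^sup>2" for x by simp
    show "((\<lambda>x. 1 / \<rho> - 1 / (\<rho> * (1 + \<rho> * x))) \<longlongrightarrow> 1 / \<rho>) at_top"
      using r by real_asymp
  qed
  then show ?thesis by simp
qed

lemma int_bound:
  assumes r: "0 < (\<rho>::real)"
  shows "(\<integral>\<^sup>+y. ennreal (1 / (1 + \<rho> * \<bar>y\<bar>)\<^sup>2) \<partial>lborel) \<le> ennreal (2 / \<rho>)"
proof -
  define g where "g y = ennreal (1 / (1 + \<rho> * y)\<^sup>2) * indicator {0..} y" for y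
  have gm: "g \<in> borel_measurable borel" unfolding g_def by measurable
  have le: "ennreal (1 / (1 + \<rho> * \<bar>y\<bar>)\<^sup>2) \<le> g y + g (0 + (-1) * y)" for y
    by (cases "y \<ge> 0") (auto simp: g_def indicator_def)
  have "(\<integral>\<^sup>+y. ennreal (1 / (1 + \<rho> * \<bar>y\<bar>)\<^sup>2) \<partial>lborel) \<le> (\<integral>\<^sup>+y. g y + g (0 + (-1) * y) \<partial>lborel)"
    by (rule nn_integral_mono) (rule le)
  also have "\<dots> = (\<integral>\<^sup>+y. g y \<partial>lborel) + (\<integral>\<^sup>+y. g (0 + (-1) * y) \<partial>lborel)"
    using gm by (intro nn_integral_add) auto
  also have "(\<integral>\<^sup>+y. g (0 + (-1) * y) \<partial>lborel) = (\<integral>\<^sup>+y. g y \<partial>lborel)"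
    using nn_integral_real_affine[OF gm, of "-1" 0] by simp
  also have "(\<integral>\<^sup>+y. g y \<partial>lborel) = ennreal (1 / \<rho>)" unfolding g_def by (rule half_int[OF r])
  also have "ennreal (1 / \<rho>) + ennreal (1 / \<rho>) = ennreal (2 / \<rho>)"
    using r by (simp flip: ennreal_plus)
  finally show ?thesis .
qed



fun invt :: "trm \<Rightarrow> bool" where
"invt (Tm c a i j k l p) = (c = 0 \<or> (a - int i - int k \<le> 0 \<and> (0 < k + l \<longrightarrow> a - int i - int k \<le> -2)))"

fun need :: "trm \<Rightarrow> nat" where
"need (Tm c a i j k l p) = i + j + k + l + p + 6"

fun cst :: "trm \<Rightarrow> real" where
"cst (Tm c a i j k l p) = \<bar>c\<bar> * ((real (j + l) + 3) * (real (i + k) + 1) * 2 ^ (i + j + k + l + 6))"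

lemma cst_nonneg: "0 \<le> cst t" by (cases t) auto

lemma invt_dyl:
  assumes iv0: "invt t" and us: "u \<in> set (dyl t)" shows "invt u"
proof (cases t)
  case (Tm c a i j k l p)
  from iv0 Tm have iv: "c = 0 \<or> (a - int i - int k \<le> 0 \<and> (0 < k + l \<longrightarrow> a - int i - int k \<le> -2))" by simp
  from us Tm have "u = Tm (c * real i) (a-1) (i-1) (j+1) k l p \<or> u = Tm (c * real j) (a-1) i (j-1) (k+1) l p \<or>
     u = Tm (c * real k) (a-1) i j (k-1) (l+1) p \<or> u = Tm (c * real l) (a-1) i j (k+1) (l-1) p \<or> u = Tm c a i (j+1) k l (p+1)"
    by simp
  then show ?thesis
  proof (elim disjE)
    assume u: "u = Tm (c * real i) (a-1) (i-1) (j+1) k l p"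
    show ?thesis
    proof (cases "i = 0")
      case True then show ?thesis using u by simp
    next
      case False then have "int (i - 1) = int i - 1" by simp
      then show ?thesis using u iv by auto
    qed
  next
    assume u: "u = Tm (c * real j) (a-1) i (j-1) (k+1) l p"
    show ?thesis using u iv by auto
  next
    assume u: "u = Tm (c * real k) (a-1) i j (k-1) (l+1) p"
    show ?thesis
    proof (cases "k = 0")
      case True then show ?thesis using u by simp
    next
      case False then have "int (k - 1) = int k - 1" by simp
      then show ?thesis using u iv False by auto
    qed
  next
    assume u: "u = Tm (c * real l) (a-1) i j (k+1) (l-1) p"
    show ?thesis
    proof (cases "l = 0")
      case True then show ?thesis using u by simp
    next
      case False then show ?thesis using u iv by auto
    qed
  next
    assume u: "u = Tm c a i (j+1) k l (p+1)"
    show ?thesis using u iv by auto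
  qed
qed

lemma invt_drl: "invt t \<Longrightarrow> u \<in> set (drl t) \<Longrightarrow> invt u"
  by (cases t) auto

lemma invt_dyI: "\<forall>t\<in>set (dyI m). invt t"
proof (induction m)
  case 0 then show ?case by (simp add: dyI_def)
next
  case (Suc m) then show ?case using invt_dyl by (auto simp: dyI_def)
qed

lemma invt_drI: "\<forall>t\<in>set L. invt t \<Longrightarrow> \<forall>t\<in>set (drI n L). invt t"
proof (induction n)
  case 0 then show ?case by (simp add: drI_def)
next
  case (Suc n) then show ?case using invt_drl by (auto simp: drI_Suc)
qed

lemma term_bound:
  assumes S: "schwartz \<phi>" and r1: "1 \<le> \<rho>" and iv: "invt t" and nd: "need t \<le> N"
  shows "norm (tm \<phi> (\<lambda>y. y) (\<lambda>_. 1) (\<lambda>_. 0) (\<lambda>_. 0) t \<rho> y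
             - tm \<phi> sinh cosh sinh cosh t \<rho> y) * (\<rho>\<^sup>2 * (1 + \<rho> * \<bar>y\<bar>)\<^sup>2) \<le> cst t * schwartz_norm N \<phi>"
proof (cases t)
  case (Tm c a i j k l p)
  have s0: "0 \<le> schwartz_norm N \<phi>" by (rule sN_nonneg[OF S])
  show ?thesis
  proof (cases "c = 0")
    case True then show ?thesis using Tm s0 by simp
  next
    case c: False
    show ?thesis
    proof (cases "0 < k + l")
      case True
      have w: "a - int i - int k \<le> -2" using iv c True Tm by auto
      have "norm (tm \<phi> (\<lambda>y. y) (\<lambda>_. 1) (\<lambda>_. 0) (\<lambda>_. 0) t \<rho> y
             - tm \<phi> sinh cosh sinh cosh t \<rho> y) * (\<rho>\<^sup>2 * (1 + \<rho> * \<bar>y\<bar>)\<^sup>2) \<le> \<bar>c\<bar> * 2 ^ (j + l + 3) * schwartz_norm N \<phi>"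
        unfolding Tm by (rule term_bound_a[OF S r1 True w]) (use nd Tm in simp)
      also have "\<dots> \<le> cst t * schwartz_norm N \<phi>"
      proof -
        define F where "F = (real (j + l) + 3) * (real (i + k) + 1)"
        have F1: "1 \<le> F" unfolding F_def using mult_mono[of 1 "real (j + l) + 3" 1 "real (i + k) + 1"] by simp
        have "(2::real) ^ (j + l + 3) \<le> 2 ^ (i + j + k + l + 6)" by (intro power_increasing) auto
        also have "\<dots> \<le> F * 2 ^ (i + j + k + l + 6)" using mult_right_mono[OF F1, of "(2::real) ^ (i + j + k + l + 6)"] by simp
        finally have "\<bar>c\<bar> * 2 ^ (j + l + 3) \<le> \<bar>c\<bar> * (F * 2 ^ (i + j + k + l + 6))" by (rule mult_left_mono) simp
        then have "\<bar>c\<bar> * 2 ^ (j + l + 3) * schwartz_norm N \<phi> \<le> \<bar>c\<bar> * (F * 2 ^ (i + j + k + l + 6)) * schwartz_norm N \<phi>"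
          by (rule mult_right_mono) (rule s0)
        then show ?thesis unfolding Tm F_def by simp
      qed
      finally show ?thesis .
    next
      case False
      then have k0: "k = 0" "l = 0" by auto
      have w: "a - int i \<le> 0" using iv c Tm k0 by auto
      have "norm (tm \<phi> (\<lambda>y. y) (\<lambda>_. 1) (\<lambda>_. 0) (\<lambda>_. 0) t \<rho> y
             - tm \<phi> sinh cosh sinh cosh t \<rho> y) * (\<rho>\<^sup>2 * (1 + \<rho> * \<bar>y\<bar>)\<^sup>2)
           \<le> \<bar>c\<bar> * ((real j + 3) * ((real i + 1) * 2 ^ (j + 6) * schwartz_norm N \<phi>))"
        unfolding Tm k0 by (rule term_bound_b[OF S r1 w]) (use nd Tm k0 in simp)
      also have "\<dots> \<le> cst t * schwartz_norm N \<phi>"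
      proof -
        have "(2::real) ^ (j + 6) \<le> 2 ^ (i + j + 6)" by (intro power_increasing) auto
        then have "(real i + 1) * 2 ^ (j + 6) \<le> (real i + 1) * 2 ^ (i + j + 6)" by (rule mult_left_mono) simp
        then have "(real i + 1) * 2 ^ (j + 6) * schwartz_norm N \<phi> \<le> (real i + 1) * 2 ^ (i + j + 6) * schwartz_norm N \<phi>"
          by (rule mult_right_mono) (rule s0)
        then have "(real j + 3) * ((real i + 1) * 2 ^ (j + 6) * schwartz_norm N \<phi>)
            \<le> (real j + 3) * ((real i + 1) * 2 ^ (i + j + 6) * schwartz_norm N \<phi>)"
          by (rule mult_left_mono) simp
        then have "\<bar>c\<bar> * ((real j + 3) * ((real i + 1) * 2 ^ (j + 6) * schwartz_norm N \<phi>))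
            \<le> \<bar>c\<bar> * ((real j + 3) * ((real i + 1) * 2 ^ (i + j + 6) * schwartz_norm N \<phi>))"
          by (rule mult_left_mono) simp
        then show ?thesis unfolding Tm k0 by (simp add: mult_ac)
      qed
      finally show ?thesis .
    qed
  qed
qed

lemma sum_norm_bound:
  fixes f :: "'a \<Rightarrow> complex"
  assumes W: "0 \<le> W" and b: "\<And>t. t \<in> set L \<Longrightarrow> norm (f t) * W \<le> g t"
  shows "norm (\<Sum>t\<leftarrow>L. f t) * W \<le> (\<Sum>t\<leftarrow>L. g t)"
  using b
proof (induction L)
  case Nil then show ?case by simp
next
  case (Cons a L)
  have "norm (\<Sum>t\<leftarrow>a # L. f t) * W \<le> (norm (f a) + norm (\<Sum>t\<leftarrow>L. f t)) * W"
    using W by (intro mult_right_mono) (auto simp: norm_triangle_ineq)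
  also have "\<dots> = norm (f a) * W + norm (\<Sum>t\<leftarrow>L. f t) * W" by (simp add: algebra_simps)
  also have "\<dots> \<le> g a + (\<Sum>t\<leftarrow>L. g t)" using Cons by (intro add_mono) auto
  finally show ?case by simp
qed

lemma final_ineq:
  assumes M0: "0 \<le> (M::real)" and r1: "1 \<le> \<rho>" and p1: "1 \<le> p"
  shows "(M / \<rho>\<^sup>2) powr (p - 1) * (M / \<rho>\<^sup>2) * (2 / \<rho>) \<le> (2 * M * \<rho> powr (- 2 - 1 / p)) powr p"
proof (cases "M = 0")
  case True then show ?thesis by simp
next
  case False
  then have M: "0 < M" using M0 by simp
  have r0: "0 < \<rho>" using r1 by simp
  have p0: "0 < p" using p1 by simp
  have A: "M / \<rho>\<^sup>2 = M * \<rho> powr (-2)" using r0 by (simp add: powr_minus powr_numeral divide_inverse)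
  have Ap: "0 < M / \<rho>\<^sup>2" using M r0 by simp
  have "(M / \<rho>\<^sup>2) powr (p - 1) * (M / \<rho>\<^sup>2) = (M / \<rho>\<^sup>2) powr p"
    using Ap M powr_add[of "M / \<rho>\<^sup>2" "p - 1" 1] by simp
  also have "\<dots> = M powr p * \<rho> powr (-2 * p)" unfolding A using M r0 by (simp add: powr_mult powr_powr)
  finally have L: "(M / \<rho>\<^sup>2) powr (p - 1) * (M / \<rho>\<^sup>2) * (2 / \<rho>) = 2 * (M powr p * \<rho> powr (-2 * p - 1))"
    using r0 by (simp add: powr_diff divide_inverse powr_minus)
  have R: "(2 * M * \<rho> powr (- 2 - 1 / p)) powr p = 2 powr p * (M powr p * \<rho> powr (-2 * p - 1))"
  proof -
    have "(- 2 - 1 / p) * p = -2 * p - 1" using p0 by (simp add: field_simps)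
    then show ?thesis using M r0 by (simp add: powr_mult powr_powr)
  qed
  have "2 \<le> (2::real) powr p" using powr_mono[OF p1, of 2] by simp
  then show ?thesis unfolding L R using M r0 by (intro mult_right_mono) auto
qed

theorem lemma2p2:
  "\<forall>n m::nat. \<exists>N::nat. \<exists>C::real \<Rightarrow> real.
     \<forall>\<phi>. schwartz \<phi> \<longrightarrow>
       (\<forall>\<rho>::real. \<rho> \<ge> 1 \<longrightarrow>
          (let G = (d_rho ^^ n) ((d_y_scaled ^^ m) (Ffun \<phi>)) \<rho> in
            (\<forall>p::real. p \<ge> 1 \<longrightarrow>
               (\<integral>\<^sup>+ y. ennreal (norm (G y) powr p) \<partial>lborel)
                 \<le> ennreal ((C (schwartz_norm N \<phi>) * \<rho> powr (-2 - 1 / p)) powr p)) \<and>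
            (AE y in lborel. norm (G y) \<le> C (schwartz_norm N \<phi>) * \<rho> powr (-2))))"
proof (intro allI)
  fix n m :: nat
  define L where "L = drI n (dyI m)"
  define N where "N = sum_list (map need L)"
  define Q where "Q = sum_list (map cst L)"
  have Q0: "0 \<le> Q" unfolding Q_def by (rule sum_list_nonneg) (auto simp: cst_nonneg)
  have ivL: "\<forall>t\<in>set L. invt t" unfolding L_def by (rule invt_drI[OF invt_dyI])
  have ndL: "need t \<le> N" if "t \<in> set L" for t
    unfolding N_def using that by (intro member_le_sum_list) auto
  show "\<exists>N. \<exists>C. \<forall>\<phi>. schwartz \<phi> \<longrightarrow>
       (\<forall>\<rho>::real. \<rho> \<ge> 1 \<longrightarrow>
          (let G = (d_rho ^^ n) ((d_y_scaled ^^ m) (Ffun \<phi>)) \<rho> in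
            (\<forall>p::real. p \<ge> 1 \<longrightarrow>
               (\<integral>\<^sup>+ y. ennreal (norm (G y) powr p) \<partial>lborel)
                 \<le> ennreal ((C (schwartz_norm N \<phi>) * \<rho> powr (-2 - 1 / p)) powr p)) \<and>
            (AE y in lborel. norm (G y) \<le> C (schwartz_norm N \<phi>) * \<rho> powr (-2))))"
  proof (intro exI[of _ N] exI[of _ "\<lambda>s. 2 * Q * s"] allI impI)
    fix \<phi> :: "real \<Rightarrow> complex" assume S: "schwartz \<phi>"
    fix \<rho> :: real assume r1: "1 \<le> \<rho>"
    have r0: "0 < \<rho>" using r1 by simp
    let ?s = "schwartz_norm N \<phi>"
    have s0: "0 \<le> ?s" by (rule sN_nonneg[OF S])
    define M where "M = Q * ?s"
    have M0: "0 \<le> M" using Q0 s0 by (simp add: M_def)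
    define A where "A = M / \<rho>\<^sup>2"
    have A0: "0 \<le> A" using M0 by (simp add: A_def)
    have Geq: "(d_rho ^^ n) ((d_y_scaled ^^ m) (Ffun \<phi>)) \<rho> = (\<lambda>y. D \<phi> L \<rho> y)"
      using R_iter[OF S Y_iter[OF S], of n] r0 unfolding L_def by auto
    have pt: "norm (D \<phi> L \<rho> y) \<le> A * (1 / (1 + \<rho> * \<bar>y\<bar>)\<^sup>2)" for y
    proof -
      have "0 < 1 + \<rho> * \<bar>y\<bar>" using r0 by (simp add: add_pos_nonneg)
      then have W: "0 < \<rho>\<^sup>2 * (1 + \<rho> * \<bar>y\<bar>)\<^sup>2" using r0 by (intro mult_pos_pos) auto
      have "norm (D \<phi> L \<rho> y) * (\<rho>\<^sup>2 * (1 + \<rho> * \<bar>y\<bar>)\<^sup>2) \<le> (\<Sum>t\<leftarrow>L. cst t * ?s)"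
        unfolding D_def
        by (rule sum_norm_bound) (use W term_bound[OF S r1] ivL ndL in auto)
      also have "\<dots> = M" unfolding M_def Q_def by (induction L) (simp_all add: algebra_simps)
      finally have "norm (D \<phi> L \<rho> y) \<le> M / (\<rho>\<^sup>2 * (1 + \<rho> * \<bar>y\<bar>)\<^sup>2)"
        using W by (simp add: pos_le_divide_eq)
      also have "\<dots> = A * (1 / (1 + \<rho> * \<bar>y\<bar>)\<^sup>2)" by (simp add: A_def)
      finally show ?thesis .
    qed
    have b01: "0 \<le> 1 / (1 + \<rho> * \<bar>y\<bar>)\<^sup>2" "1 / (1 + \<rho> * \<bar>y\<bar>)\<^sup>2 \<le> 1" for y
    proof -
      have "1 \<le> (1 + \<rho> * \<bar>y\<bar>)\<^sup>2" using r0 by (simp add: one_le_power)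
      then show "0 \<le> 1 / (1 + \<rho> * \<bar>y\<bar>)\<^sup>2" "1 / (1 + \<rho> * \<bar>y\<bar>)\<^sup>2 \<le> 1" by (auto simp: divide_le_eq_1)
    qed
    have ptA: "norm (D \<phi> L \<rho> y) \<le> A" for y
      using pt[of y] mult_left_mono[OF b01(2)[of y] A0] by simp
    show "let G = (d_rho ^^ n) ((d_y_scaled ^^ m) (Ffun \<phi>)) \<rho> in
            (\<forall>p::real. p \<ge> 1 \<longrightarrow>
               (\<integral>\<^sup>+ y. ennreal (norm (G y) powr p) \<partial>lborel)
                 \<le> ennreal ((2 * Q * ?s * \<rho> powr (-2 - 1 / p)) powr p)) \<and>
            (AE y in lborel. norm (G y) \<le> 2 * Q * ?s * \<rho> powr (-2))"
      unfolding Geq Let_def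
    proof (intro conjI allI impI)
      have e: "\<rho> powr (-2) = 1 / \<rho>\<^sup>2" using r0 by (simp add: powr_minus powr_numeral divide_inverse)
      have "2 * Q * ?s * \<rho> powr (-2) = 2 * A" unfolding e A_def M_def by simp
      then have "A \<le> 2 * Q * ?s * \<rho> powr (-2)" using A0 by simp
      then show "AE y in lborel. norm (D \<phi> L \<rho> y) \<le> 2 * Q * ?s * \<rho> powr (-2)"
        using ptA by (intro AE_I2) (meson order_trans)
    next
      fix p :: real assume p1: "1 \<le> p"
      define K where "K = A powr (p - 1) * A"
      have K0: "0 \<le> K" using A0 by (simp add: K_def)
      have pw: "norm (D \<phi> L \<rho> y) powr p \<le> K * (1 / (1 + \<rho> * \<bar>y\<bar>)\<^sup>2)" for y
      proof (cases "norm (D \<phi> L \<rho> y) = 0")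
        case True then show ?thesis using K0 b01[of y] by simp
      next
        case False
        let ?x = "norm (D \<phi> L \<rho> y)"
        have "?x powr p = ?x powr (p - 1) * ?x"
          using False powr_add[of ?x "p - 1" 1] by simp
        also have "\<dots> \<le> A powr (p - 1) * (A * (1 / (1 + \<rho> * \<bar>y\<bar>)\<^sup>2))"
          by (rule mult_mono) (use powr_mono2[of "p - 1" ?x A] p1 ptA[of y] pt[of y] in auto)
        finally show ?thesis by (simp add: K_def mult_ac)
      qed
      have "(\<integral>\<^sup>+ y. ennreal (norm (D \<phi> L \<rho> y) powr p) \<partial>lborel)
          \<le> (\<integral>\<^sup>+ y. ennreal K * ennreal (1 / (1 + \<rho> * \<bar>y\<bar>)\<^sup>2) \<partial>lborel)"
        by (rule nn_integral_mono) (use pw K0 b01 in \<open>simp add: ennreal_mult[symmetric]\<close>)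
      also have "\<dots> = ennreal K * (\<integral>\<^sup>+ y. ennreal (1 / (1 + \<rho> * \<bar>y\<bar>)\<^sup>2) \<partial>lborel)"
        by (rule nn_integral_cmult) measurable
      also have "\<dots> \<le> ennreal K * ennreal (2 / \<rho>)"
        by (rule mult_left_mono[OF int_bound[OF r0]]) simp
      also have "\<dots> = ennreal (K * (2 / \<rho>))" using K0 r0 by (intro ennreal_mult[symmetric]) auto
      also have "\<dots> \<le> ennreal ((2 * Q * ?s * \<rho> powr (-2 - 1 / p)) powr p)"
      proof (rule ennreal_leI)
        show "K * (2 / \<rho>) \<le> (2 * Q * ?s * \<rho> powr (-2 - 1 / p)) powr p"
          using final_ineq[OF M0 r1 p1] by (simp add: K_def A_def M_def mult.assoc)
      qed
      finally show "(\<integral>\<^sup>+ y. ennreal (norm (D \<phi> L \<rho> y) powr p) \<partial>lborel)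
          \<le> ennreal ((2 * Q * ?s * \<rho> powr (-2 - 1 / p)) powr p)" .
    qed
  qed
qed

end
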